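(* For any graph $G$ and integers $k\ge 2$, $r\ge 3$, let $\mathcal{G}=\bigcup_{v\in V(G)}\mathcal{G}^*(v)$. Then $R_r(\mathcal{B}(G),k)\le R(\mathcal{G},k)+r-2$.
   Context: For a graph $G$, a hypergraph $H$ is a Berge-$G$ hypergraph if there are an injective map $\phi:V(G)\to V(H)$ and pairwise distinct hyperedges $e_{xy}\in E(H)$, one for each $xy\in E(G)$, with $\phi(x),\phi(y)\in e_{xy}$. $\mathcal{B}(G)$ denotes the family of all Berge-$G$ hypergraphs. For a family $\mathcal{H}$ of $r$-uniform hypergraphs, $R_r(\mathcal{H},k)$ is the smallest $n$ such that every $k$-coloring of the hyperedges of the complete $r$-uniform hypergraph $K_n^r$ contains a monochromatic subhypergraph belonging to $\mathcal{H}$. For a family $\mathcal{G}$ of graphs, $R(\mathcal{G},k)$ is the smallest $n$ such that every $k$-coloring of the edges of $K_n$ contains a monochromatic subgraph isomorphic to some member of $\mathcal{G}$. For a graph $G$ and $v\in V(G)$ with neighborhood $N(v)=\{q_1,\dots,q_t\}$, let $G'=G-v$. An extension of $G-v$ is any graph obtained from $G'$ by adding, for each $i=1,\dots,t$, an edge $q_ir_i$ not belonging to $G'$, where each $r_i$ is either a vertex of $G'$ or a new vertex not in $G'$ (new vertices may be shared by several $r_i$), and the $t$ added edges are pairwise distinct. $\mathcal{G}^*(v)$ denotes the family of all such extensions. *)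

theory Defs
  imports Main
begin

definition simple_graph :: "'a set \<Rightarrow> 'a set set \<Rightarrow> bool" where
  "simple_graph V E \<longleftrightarrow> finite V \<and> (\<forall>e\<in>E. e \<subseteq> V \<and> card e = 2)"

definition nbhd :: "'a set set \<Rightarrow> 'a \<Rightarrow> 'a set" where
  "nbhd E v = {q. {v, q} \<in> E}"

text \<open>Vertices of an extension live in type 'a + nat:
  the old vertices of G - v are Inl x, new vertices are Inr j.\<close>
definition extensions :: "'a set \<Rightarrow> 'a set set \<Rightarrow> 'a \<Rightarrow> (('a + nat) set \<times> ('a + nat) set set) set" where
  "extensions V E v =
    {(Inl ` (V - {v}) \<union> rho ` nbhd E v,
      ((`) Inl) ` {e\<in>E. v \<notin> e} \<union> (\<lambda>q. {Inl q, rho q}) ` nbhd E v) | rho.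
       (\<forall>q\<in>nbhd E v. (rho q \<in> Inl ` (V - {v}) \<or> rho q \<in> range Inr)
                      \<and> rho q \<noteq> Inl q
                      \<and> {Inl q, rho q} \<notin> ((`) Inl) ` {e\<in>E. v \<notin> e})
       \<and> inj_on (\<lambda>q. {Inl q, rho q}) (nbhd E v)}"

definition graph_arrows :: "nat \<Rightarrow> nat \<Rightarrow> ('b set \<times> 'b set set) set \<Rightarrow> bool" where
  "graph_arrows n k Gs \<longleftrightarrow>
    (\<forall>c :: nat set \<Rightarrow> nat. (\<forall>e. e \<subseteq> {..<n} \<and> card e = 2 \<longrightarrow> c e < k) \<longrightarrow>
      (\<exists>H\<in>Gs. \<exists>i f. inj_on f (fst H) \<and> f ` fst H \<subseteq> {..<n} \<and>
                    (\<forall>e\<in>snd H. c (f ` e) = i)))"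

definition graph_ramsey :: "nat \<Rightarrow> ('b set \<times> 'b set set) set \<Rightarrow> nat" where
  "graph_ramsey k Gs = (LEAST n. graph_arrows n k Gs)"

definition berge_arrows :: "nat \<Rightarrow> nat \<Rightarrow> nat \<Rightarrow> 'a set \<Rightarrow> 'a set set \<Rightarrow> bool" where
  "berge_arrows r n k V E \<longleftrightarrow>
    (\<forall>c :: nat set \<Rightarrow> nat. (\<forall>e. e \<subseteq> {..<n} \<and> card e = r \<longrightarrow> c e < k) \<longrightarrow>
      (\<exists>i phi h. inj_on phi V \<and> phi ` V \<subseteq> {..<n} \<and> inj_on h E \<and>
         (\<forall>xy\<in>E. h xy \<subseteq> {..<n} \<and> card (h xy) = r \<and> c (h xy) = i \<and> phi ` xy \<subseteq> h xy)))"

definition berge_ramsey :: "nat \<Rightarrow> nat \<Rightarrow> 'a set \<Rightarrow> 'a set set \<Rightarrow> nat" where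
  "berge_ramsey r k V E = (LEAST n. berge_arrows r n k V E)"

end

theory Submission
  imports Defs "HOL-Library.Ramsey"
begin

lemma ext_elim:
  assumes "H \<in> extensions V E v"
  obtains rho where
    "H = (Inl ` (V - {v}) \<union> rho ` nbhd E v,
      ((`) Inl) ` {e\<in>E. v \<notin> e} \<union> (\<lambda>q. {Inl q, rho q}) ` nbhd E v)"
    "\<forall>q\<in>nbhd E v. (rho q \<in> Inl ` (V - {v}) \<or> rho q \<in> range Inr)
                      \<and> rho q \<noteq> Inl q
                      \<and> {Inl q, rho q} \<notin> ((`) Inl) ` {e\<in>E. v \<notin> e}"
    "inj_on (\<lambda>q. {Inl q, rho q}) (nbhd E v)"
  using assms unfolding extensions_def by blast

lemma nbhd_sub:
  assumes "simple_graph V E" "v \<in> V"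
  shows "nbhd E v \<subseteq> V - {v}"
proof
  fix q assume "q \<in> nbhd E v"
  hence e: "{v,q} \<in> E" by (simp add: nbhd_def)
  hence "{v,q} \<subseteq> V" "card {v,q} = 2" using assms unfolding simple_graph_def by auto
  thus "q \<in> V - {v}" by (cases "q = v") auto
qed

lemma ext_exists:
  assumes "simple_graph V E" "v \<in> V"
  shows "\<exists>H. H \<in> extensions V E v"
proof -
  have fin: "finite (nbhd E v)" using nbhd_sub[OF assms] assms(1)
    by (meson finite_Diff finite_subset simple_graph_def)
  obtain g :: "'a \<Rightarrow> nat" and n where g: "inj_on g (nbhd E v)"
    using finite_imp_inj_to_nat_seg[OF fin] by blast
  define rho where "rho q = (Inr (g q) :: 'a + nat)" for q
  have "(Inl ` (V - {v}) \<union> rho ` nbhd E v,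
      ((`) Inl) ` {e\<in>E. v \<notin> e} \<union> (\<lambda>q. {Inl q, rho q}) ` nbhd E v) \<in> extensions V E v"
    unfolding extensions_def
  proof (rule CollectI, rule exI[of _ rho], intro conjI refl ballI)
    fix q assume "q \<in> nbhd E v"
    show "rho q \<in> Inl ` (V - {v}) \<or> rho q \<in> range Inr" by (simp add: rho_def)
    show "rho q \<noteq> Inl q" by (simp add: rho_def)
    show "{Inl q, rho q} \<notin> (`) Inl ` {e \<in> E. v \<notin> e}" by (auto simp: rho_def)
  next
    show "inj_on (\<lambda>q. {Inl q, rho q}) (nbhd E v)"
      by (auto simp: inj_on_def rho_def doubleton_eq_iff)
  qed
  thus ?thesis by blast
qed

lemma ext_props:
  assumes "simple_graph V E" "v \<in> V" "H \<in> extensions V E v"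
  shows "finite (fst H) \<and> (\<forall>e\<in>snd H. e \<subseteq> fst H \<and> card e = 2)"
proof -
  obtain rho where H: "H = (Inl ` (V - {v}) \<union> rho ` nbhd E v,
      ((`) Inl) ` {e\<in>E. v \<notin> e} \<union> (\<lambda>q. {Inl q, rho q}) ` nbhd E v)"
    and c: "\<forall>q\<in>nbhd E v. (rho q \<in> Inl ` (V - {v}) \<or> rho q \<in> range Inr)
                      \<and> rho q \<noteq> Inl q
                      \<and> {Inl q, rho q} \<notin> ((`) Inl) ` {e\<in>E. v \<notin> e}"
    by (rule ext_elim[OF assms(3)])
  have nb: "nbhd E v \<subseteq> V - {v}" using nbhd_sub[OF assms(1,2)] .
  have fV: "finite V" using assms(1) simple_graph_def by blast
  have fin: "finite (nbhd E v)" using nb fV by (meson finite_Diff finite_subset)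
  have "finite (fst H)" using H fV fin by simp
  moreover have "\<forall>e\<in>snd H. e \<subseteq> fst H \<and> card e = 2"
  proof
    fix e assume eH: "e \<in> snd H"
    then consider (a) e' where "e = Inl ` e'" "e' \<in> E" "v \<notin> e'"
      | (b) q where "e = {Inl q, rho q}" "q \<in> nbhd E v" using H by (auto simp del: image_iff)
    thus "e \<subseteq> fst H \<and> card e = 2"
    proof cases
      case a
      have "e' \<subseteq> V" "card e' = 2" using a assms(1) unfolding simple_graph_def by auto
      then show ?thesis using a H by (auto simp: card_image)
    next
      case b
      have "q \<in> V - {v}" using b nb by blast
      moreover have "rho q \<noteq> Inl q" using c b by blast
      ultimately show ?thesis using H b by auto
    qed
  qed
  ultimately show ?thesis ..
qed

lemma arrows_exists:
  assumes "H \<in> Gs" "finite (fst H)" "\<forall>e\<in>snd H. e \<subseteq> fst H \<and> card e = 2"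
  shows "\<exists>M. graph_arrows M k Gs"
proof -
  define m where "m = card (fst H)"
  obtain M::nat where M: "partn_lst {..<M} (replicate k m) 2" using ramsey_full by blast
  have "graph_arrows M k Gs" unfolding graph_arrows_def
  proof (intro allI impI)
    fix c :: "nat set \<Rightarrow> nat" assume c: "\<forall>e. e \<subseteq> {..<M} \<and> card e = 2 \<longrightarrow> c e < k"
    have "c \<in> nsets {..<M} 2 \<rightarrow> {..<k}" using c by (auto simp: nsets_def)
    then obtain i S where i: "i < length (replicate k m)" and S: "S \<in> nsets {..<M} (replicate k m ! i)"
      and mono: "c ` nsets S 2 \<subseteq> {i}"
      using partn_lstE[OF M] by (metis length_replicate)
    have Sfin: "finite S" "card S = m" "S \<subseteq> {..<M}" using S i by (auto simp: nsets_def)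
    obtain b where b: "bij_betw b (fst H) S"
      using finite_same_card_bij[OF assms(2) Sfin(1)] Sfin(2) m_def by auto
    have "\<forall>e\<in>snd H. c (b ` e) = i"
    proof
      fix e assume e: "e \<in> snd H"
      have "inj_on b e" using b e assms(3) bij_betw_def inj_on_subset by metis
      moreover have "finite e" using e assms(3) by (metis card.infinite zero_neq_numeral)
      ultimately have "b ` e \<in> nsets S 2" using e assms(3) b by (auto simp: nsets_def card_image bij_betw_def)
      thus "c (b`e) = i" using mono by blast
    qed
    thus "\<exists>H\<in>Gs. \<exists>i f. inj_on f (fst H) \<and> f ` fst H \<subseteq> {..<M} \<and> (\<forall>e\<in>snd H. c (f ` e) = i)"
      using assms(1) b Sfin(3) unfolding bij_betw_def by blast
  qed
  thus ?thesis by blast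
qed


lemma main_step:
  assumes sg: "simple_graph V E" and r3: "r \<ge> 3"
    and GA: "graph_arrows N k (\<Union>v\<in>V. extensions V E v)"
  shows "berge_arrows r (N + r - 2) k V E"
  unfolding berge_arrows_def
proof (intro allI impI)
  fix c :: "nat set \<Rightarrow> nat"
  assume hc: "\<forall>e. e \<subseteq> {..<N + r - 2} \<and> card e = r \<longrightarrow> c e < k"
  define T where "T = {N..<N+r-2}"
  have cT: "card T = r - 2" "finite T" unfolding T_def using r3 by auto
  have NT: "N \<in> T" unfolding T_def using r3 by auto
  have keyU: "e \<union> T \<subseteq> {..<N + r - 2} \<and> card (e \<union> T) = r"
    if "e \<subseteq> {..<N}" "card e = 2" for e
  proof -
    have fe: "finite e" using that(2) by (metis card.infinite zero_neq_numeral)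
    have "e \<inter> T = {}" using that(1) unfolding T_def by auto
    hence "card (e \<union> T) = 2 + (r - 2)" using card_Un_disjoint[OF fe cT(2)] that(2) cT(1) by simp
    moreover have "e \<union> T \<subseteq> {..<N + r - 2}" using that(1) r3 unfolding T_def by auto
    ultimately show ?thesis using r3 by simp
  qed
  define c' where "c' e = c (e \<union> T)" for e
  have cb: "\<forall>e. e \<subseteq> {..<N} \<and> card e = 2 \<longrightarrow> c' e < k"
  proof (intro allI impI)
    fix e assume "e \<subseteq> {..<N} \<and> card e = 2"
    hence "e \<union> T \<subseteq> {..<N + r - 2} \<and> card (e \<union> T) = r" using keyU by blast
    thus "c' e < k" using hc unfolding c'_def by blast
  qed
  have exH: "\<exists>H\<in>(\<Union>v\<in>V. extensions V E v). \<exists>i f. inj_on f (fst H) \<and> f ` fst H \<subseteq> {..<N} \<and> (\<forall>e\<in>snd H. c' (f ` e) = i)"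
    using GA[unfolded graph_arrows_def, THEN spec[where x=c'], THEN mp, OF cb] .
  then obtain Hx where Hx: "Hx \<in> (\<Union>v\<in>V. extensions V E v)"
    and exf: "\<exists>i f. inj_on f (fst Hx) \<and> f ` fst Hx \<subseteq> {..<N} \<and> (\<forall>e\<in>snd Hx. c' (f ` e) = i)"
    by (rule bexE)
  from exf obtain i f where finj: "inj_on f (fst Hx)"
    and fN: "f ` fst Hx \<subseteq> {..<N}" and fc: "\<forall>e\<in>snd Hx. c' (f ` e) = i"
    by (elim exE conjE)
  from Hx obtain v where v: "v \<in> V" "Hx \<in> extensions V E v" by (rule UN_E)
  obtain rho where H: "Hx = (Inl ` (V - {v}) \<union> rho ` nbhd E v,
      ((`) Inl) ` {e\<in>E. v \<notin> e} \<union> (\<lambda>q. {Inl q, rho q}) ` nbhd E v)"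
    and rc: "\<forall>q\<in>nbhd E v. (rho q \<in> Inl ` (V - {v}) \<or> rho q \<in> range Inr)
                      \<and> rho q \<noteq> Inl q
                      \<and> {Inl q, rho q} \<notin> ((`) Inl) ` {e\<in>E. v \<notin> e}"
    and rinj: "inj_on (\<lambda>q. {Inl q, rho q}) (nbhd E v)"
    by (rule ext_elim[OF v(2)])
  have props: "finite (fst Hx) \<and> (\<forall>e\<in>snd Hx. e \<subseteq> fst Hx \<and> card e = 2)"
    using ext_props[OF sg v] .
  define other where "other e = (SOME q. q \<in> e \<and> q \<noteq> v)" for e
  have oth: "other e \<in> nbhd E v \<and> other e \<noteq> v \<and> e = {v, other e}" if "e \<in> E" "v \<in> e" for e
  proof -
    have "card e = 2" using that sg unfolding simple_graph_def by auto
    then obtain a b where ab: "e = {a,b}" "a \<noteq> b" by (meson card_2_iff)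
    have ex: "\<exists>q. q \<in> e \<and> q \<noteq> v" using ab by auto
    have "other e \<in> e \<and> other e \<noteq> v" unfolding other_def using someI_ex[OF ex] .
    moreover hence "e = {v, other e}" using ab that(2) by auto
    ultimately show ?thesis using that(1) unfolding nbhd_def by auto
  qed
  define ge where "ge e = (if v \<in> e then {Inl (other e), rho (other e)} else Inl ` e)" for e
  have ge_in: "ge e \<in> snd Hx" if "e \<in> E" for e
    using that oth[OF that] H unfolding ge_def by auto
  have ge_inj: "inj_on ge E"
  proof (rule inj_onI)
    fix x y assume xy: "x \<in> E" "y \<in> E" "ge x = ge y"
    show "x = y"
    proof (cases "v \<in> x"; cases "v \<in> y")
      assume a: "v \<in> x" "v \<in> y"
      hence "{Inl (other x), rho (other x)} = {Inl (other y), rho (other y)}"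
        using xy(3) unfolding ge_def by simp
      hence "other x = other y" using rinj oth[OF xy(1) a(1)] oth[OF xy(2) a(2)]
        unfolding inj_on_def by blast
      thus ?thesis using oth[OF xy(1) a(1)] oth[OF xy(2) a(2)] by metis
    next
      assume a: "v \<in> x" "v \<notin> y"
      hence "{Inl (other x), rho (other x)} = Inl ` y"
        using xy(3) unfolding ge_def by simp
      hence False using rc oth[OF xy(1) a(1)] xy(2) a(2) by blast
      thus ?thesis ..
    next
      assume a: "v \<notin> x" "v \<in> y"
      hence "{Inl (other y), rho (other y)} = Inl ` x"
        using xy(3) unfolding ge_def by simp
      hence False using rc oth[OF xy(2) a(2)] xy(1) a(1) by blast
      thus ?thesis ..
    next
      assume a: "v \<notin> x" "v \<notin> y"
      hence "(Inl ` x :: ('a + nat) set) = Inl ` y" using xy(3) unfolding ge_def by simp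
      thus ?thesis by (simp add: inj_image_eq_iff)
    qed
  qed
  define h where "h e = f ` ge e \<union> T" for e
  define phi where "phi x = (if x = v then N else f (Inl x))" for x
  have VH: "Inl ` (V - {v}) \<subseteq> fst Hx" using H by auto
  have fgeN: "f ` ge e \<subseteq> {..<N}" "card (f ` ge e) = 2" if "e \<in> E" for e
  proof -
    have "ge e \<subseteq> fst Hx" "card (ge e) = 2" using props ge_in[OF that] by auto
    thus "f ` ge e \<subseteq> {..<N}" "card (f ` ge e) = 2"
      using fN finj by (auto simp: card_image inj_on_subset)
  qed
  have h_props: "h e \<subseteq> {..<N + r - 2} \<and> card (h e) = r \<and> c (h e) = i" if "e \<in> E" for e
  proof -
    have "c' (f ` ge e) = i" using fc ge_in[OF that] by blast
    thus ?thesis using keyU[OF fgeN[OF that]] unfolding h_def c'_def by simp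
  qed
  have h_inj: "inj_on h E"
  proof (rule inj_onI)
    fix x y assume xy: "x \<in> E" "y \<in> E" "h x = h y"
    have "f ` ge x = f ` ge y"
    proof -
      have dx: "f ` ge x \<inter> T = {}" "f ` ge y \<inter> T = {}"
        using fgeN(1)[OF xy(1)] fgeN(1)[OF xy(2)] unfolding T_def by auto
      from xy(3) have "(f ` ge x \<union> T) - T = (f ` ge y \<union> T) - T" unfolding h_def by simp
      moreover have "f ` ge x \<union> T - T = f ` ge x" using dx(1) by blast
      moreover have "f ` ge y \<union> T - T = f ` ge y" using dx(2) by blast
      ultimately show ?thesis by simp
    qed
    moreover have gx: "ge x \<subseteq> fst Hx" using props ge_in[OF xy(1)] by blast
    moreover have gy: "ge y \<subseteq> fst Hx" using props ge_in[OF xy(2)] by blast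
    ultimately have "ge x = ge y" using inj_on_image_eq_iff[OF finj gx gy] by simp
    thus "x = y" using ge_inj xy(1,2) unfolding inj_on_def by blast
  qed
  have phi_inj: "inj_on phi V"
  proof (rule inj_onI)
    fix x y assume xy: "x \<in> V" "y \<in> V" "phi x = phi y"
    have lt: "f (Inl z) < N" if "z \<in> V" "z \<noteq> v" for z using that VH fN by auto
    show "x = y"
    proof (cases "x = v"; cases "y = v")
      assume "x \<noteq> v" "y \<noteq> v"
      hence "f (Inl x) = f (Inl y)" using xy(3) unfolding phi_def by simp
      hence "Inl x = (Inl y :: 'a + nat)" using finj VH xy(1,2) \<open>x \<noteq> v\<close> \<open>y \<noteq> v\<close>
        unfolding inj_on_def by blast
      thus ?thesis by simp
    qed (use xy lt in \<open>auto simp: phi_def\<close>)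
  qed
  have phi_V: "phi ` V \<subseteq> {..<N + r - 2}"
  proof
    fix y assume "y \<in> phi ` V"
    then obtain x where x: "x \<in> V" "y = phi x" by blast
    show "y \<in> {..<N + r - 2}"
    proof (cases "x = v")
      case True thus ?thesis using x NT unfolding phi_def T_def by auto
    next
      case False
      hence "Inl x \<in> fst Hx" using VH x(1) by blast
      hence "f (Inl x) < N" using fN by blast
      thus ?thesis using x False r3 unfolding phi_def by auto
    qed
  qed
  have phi_h: "phi ` xy \<subseteq> h xy" if "xy \<in> E" for xy
  proof (cases "v \<in> xy")
    case True
    have o: "other xy \<noteq> v" "xy = {v, other xy}" using oth[OF that True] by auto
    have "phi v \<in> h xy" using NT unfolding phi_def h_def by simp
    moreover have "phi (other xy) \<in> h xy" using o True unfolding phi_def h_def ge_def by simp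
    ultimately show ?thesis using o by (metis image_insert image_empty insert_subsetI empty_subsetI)
  next
    case False
    thus ?thesis unfolding phi_def h_def ge_def by auto
  qed
  show "\<exists>i phi h. inj_on phi V \<and> phi ` V \<subseteq> {..<N + r - 2} \<and> inj_on h E \<and>
         (\<forall>xy\<in>E. h xy \<subseteq> {..<N + r - 2} \<and> card (h xy) = r \<and> c (h xy) = i \<and> phi ` xy \<subseteq> h xy)"
  proof (intro exI[of _ i] exI[of _ phi] exI[of _ h] conjI ballI)
    fix xy assume xy: "xy \<in> E"
    show "h xy \<subseteq> {..<N + r - 2}" using h_props[OF xy] by blast
    show "card (h xy) = r" using h_props[OF xy] by blast
    show "c (h xy) = i" using h_props[OF xy] by blast
    show "phi ` xy \<subseteq> h xy" using phi_h[OF xy] .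
  qed (use phi_inj phi_V h_inj in auto)
qed

theorem corollary2:
  fixes V :: "'a set" and E :: "'a set set" and k r :: nat
  assumes "simple_graph V E" and "V \<noteq> {}" and "k \<ge> 2" and "r \<ge> 3"
  shows "berge_ramsey r k V E \<le> graph_ramsey k (\<Union>v\<in>V. extensions V E v) + r - 2"
proof -
  obtain v where v: "v \<in> V" using assms(2) by blast
  obtain H where H: "H \<in> extensions V E v" using ext_exists[OF assms(1) v] by blast
  have Hin: "H \<in> (\<Union>v\<in>V. extensions V E v)" using v H by blast
  have hp: "finite (fst H) \<and> (\<forall>e\<in>snd H. e \<subseteq> fst H \<and> card e = 2)"
    using ext_props[OF assms(1) v H] .
  obtain M where "graph_arrows M k (\<Union>v\<in>V. extensions V E v)"
    using arrows_exists[OF Hin] hp by blast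
  hence GA: "graph_arrows (graph_ramsey k (\<Union>v\<in>V. extensions V E v)) k (\<Union>v\<in>V. extensions V E v)"
    unfolding graph_ramsey_def by (rule LeastI)
  have "berge_arrows r (graph_ramsey k (\<Union>v\<in>V. extensions V E v) + r - 2) k V E"
    using main_step[OF assms(1) assms(4) GA] .
  thus ?thesis unfolding berge_ramsey_def by (rule Least_le)
qed

end
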